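(* There is an absolute constant $C>0$ such that for every integer $q\geq 4$ and every positive integer $n$, \[ F_{q,q-1}(n)\leq G_{q,q-1}(n)\leq n^{1+C/\sqrt{\log q}}. \] In particular, for every fixed $\varepsilon>0$ there is $q_0(\varepsilon)$ such that for all integers $q\geq q_0(\varepsilon)$ and all positive integers $n$, $F_{q,q-1}(n)\leq G_{q,q-1}(n)\leq n^{1+\varepsilon}$.
   Context: Logarithms are to base $2$, and $[n]=\{1,\dots,n\}$. For integers $q\geq r\geq 1$ and $x,y\in\mathbb{R}^q$, write $x<_r y$ if there are at least $r$ coordinates $i\in[q]$ with $x_i<y_i$. $F_{q,r}(n)$ is the maximum $N$ such that there exist vectors $x_1,\dots,x_N\in[n]^q$ with $x_a<_r x_b$ for all $1\leq a<b\leq N$ (an $r$-increasing sequence). $G_{q,r}(n)$ is the maximum size of a set $S\subseteq[n]^q$ such that for all distinct $x,y\in S$, either $x<_r y$ or $y<_r x$ (an $r$-comparable set). *)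

theory Defs
  imports Complex_Main
begin

text \<open>Vectors in [n]^q are represented as lists of length q with entries in {1..n};
  coordinate i (1-based in the paper) is xs ! (i-1).\<close>

definition cube :: "nat \<Rightarrow> nat \<Rightarrow> nat list set" where
  "cube q n = {xs. length xs = q \<and> set xs \<subseteq> {1..n}}"

definition r_less :: "nat \<Rightarrow> nat list \<Rightarrow> nat list \<Rightarrow> bool" where
  "r_less r x y \<longleftrightarrow> r \<le> card {i. i < length x \<and> i < length y \<and> x ! i < y ! i}"

definition F :: "nat \<Rightarrow> nat \<Rightarrow> nat \<Rightarrow> nat" where
  "F q r n = Max {N. \<exists>x :: nat \<Rightarrow> nat list.
      (\<forall>a\<in>{1..N}. x a \<in> cube q n) \<and>
      (\<forall>a b. 1 \<le> a \<and> a < b \<and> b \<le> N \<longrightarrow> r_less r (x a) (x b))}"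

definition G :: "nat \<Rightarrow> nat \<Rightarrow> nat \<Rightarrow> nat" where
  "G q r n = Max {card S | S. S \<subseteq> cube q n \<and>
      (\<forall>x\<in>S. \<forall>y\<in>S. x \<noteq> y \<longrightarrow> r_less r x y \<or> r_less r y x)}"

end

theory Submission
  imports Defs
begin

definition ell :: "nat \<Rightarrow> nat \<Rightarrow> real" where
  "ell a b = real (a+b) * ln (real (a+b)) - real a * ln (real a) - real b * ln (real b)"

lemma ell_bound:
  assumes e: "0 < e" "e \<le> 1"
  shows "ell a b \<le> e * real (a+b) + ln (1/e) * real b"
proof (cases "a = 0 \<or> b = 0")
  case True
  have "ln (1/e) \<ge> 0" using e by simp
  with True show ?thesis using e by (auto simp: ell_def)
next
  case False
  hence a: "real a > 0" and b: "real b > 0" by auto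
  have s: "real (a+b) = real a + real b" by simp
  have eq: "ell a b = real a * ln ((real a + real b)/real a) + real b * ln ((real a + real b)/real b)"
    using a b by (simp add: ell_def ln_div algebra_simps)
  have 1: "real a * ln ((real a + real b)/real a) \<le> real b"
  proof -
    have "ln ((real a + real b)/real a) \<le> (real a + real b)/real a - 1"
      by (rule ln_le_minus_one) (use a b in simp)
    hence "real a * ln ((real a + real b)/real a) \<le> real a * ((real a + real b)/real a - 1)"
      using a by (simp add: mult_left_mono)
    also have "\<dots> = real b" using a by (simp add: field_simps)
    finally show ?thesis .
  qed
  have 2: "real b * ln ((real a + real b)/real b) \<le> e * (real a + real b) - real b + real b * ln (1/e)"
  proof -
    have pos: "e * ((real a + real b)/real b) > 0" using a b e by simp
    have "ln (e * ((real a + real b)/real b)) \<le> e * ((real a + real b)/real b) - 1"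
      by (rule ln_le_minus_one) (use pos in simp)
    moreover have "ln (e * ((real a + real b)/real b)) = ln e + ln ((real a + real b)/real b)"
      by (rule ln_mult_pos) (use a b e in auto)
    moreover have "ln (1/e) = - ln e" using e by (simp add: ln_div)
    ultimately have "ln ((real a + real b)/real b) \<le> e * ((real a + real b)/real b) - 1 + ln (1/e)"
      by linarith
    hence "real b * ln ((real a + real b)/real b) \<le> real b * (e * ((real a + real b)/real b) - 1 + ln (1/e))"
      using b by (simp add: mult_left_mono)
    also have "\<dots> = e * (real a + real b) - real b + real b * ln (1/e)" using b by (simp add: field_simps)
    finally show ?thesis .
  qed
  have 3: "ln (1/e) * real b = real b * ln (1/e)" "e * real (a+b) = e * (real a + real b)" by simp_all
  show ?thesis using eq 1 2 3 by linarith
qed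

lemma ell_sym: "ell a b = ell b a"
  by (simp add: ell_def add.commute)

lemma ell_bound2:
  assumes e: "0 < e" "e \<le> 1"
  shows "ell a b \<le> e * real (a+b) + ln (1/e) * real a"
  using ell_bound[OF e, of b a] by (simp add: ell_sym add.commute)

lemma xlnx_lower:
  assumes N: "N > 0" and n: "n > 0"
  shows "real c * ln (real c) \<ge> real c * (ln N - ln n) + real c - N / n"
proof (cases "c = 0")
  case True thus ?thesis using N n by simp
next
  case False
  hence c: "real c > 0" by simp
  have "ln (N / (real c * n)) \<le> N / (real c * n) - 1"
    by (rule ln_le_minus_one) (use N n c in simp)
  moreover have "ln (N / (real c * n)) = ln N - ln c - ln n"
    using N n c by (simp add: ln_div ln_mult)
  ultimately have "ln c \<ge> ln N - ln n + 1 - N / (real c * n)" by linarith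
  hence "real c * ln c \<ge> real c * (ln N - ln n + 1 - N / (real c * n))"
    using c by (simp add: mult_left_mono)
  also have "real c * (ln N - ln n + 1 - N / (real c * n)) = real c * (ln N - ln n) + real c - N / n"
    using c n by (simp add: field_simps)
  finally show ?thesis .
qed



lemma card_filter_sum:
  assumes "finite I" "finite V" "\<forall>a\<in>I. f a \<in> V"
  shows "card {a\<in>I. P (f a)} = (\<Sum>v\<in>V. if P v then card {a\<in>I. f a = v} else 0)"
proof -
  have eq: "{a\<in>I. P (f a)} = (\<Union>v\<in>{v\<in>V. P v}. {a\<in>I. f a = v})" using assms(3) by auto
  have "card (\<Union>v\<in>{v\<in>V. P v}. {a\<in>I. f a = v}) = (\<Sum>v\<in>{v\<in>V. P v}. card {a\<in>I. f a = v})"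
    by (rule card_UN_disjoint) (use assms in auto)
  also have "\<dots> = (\<Sum>v\<in>V. if P v then card {a\<in>I. f a = v} else 0)"
    by (simp add: sum.inter_filter[OF assms(2)])
  finally show ?thesis using eq by simp
qed

lemma card_sum_all:
  assumes "finite I" "finite V" "\<forall>a\<in>I. f a \<in> V"
  shows "card I = (\<Sum>v\<in>V. card {a\<in>I. f a = v})"
  using card_filter_sum[OF assms, of "\<lambda>_. True"] by simp

locale sctx =
  fixes sq :: "nat \<Rightarrow> nat list" and N q n :: nat
  assumes in_cube: "\<And>a. a < N \<Longrightarrow> sq a \<in> cube q n"
    and incr: "\<And>a b. a < b \<Longrightarrow> b < N \<Longrightarrow> r_less (q-1) (sq a) (sq b)"
begin

definition cnt :: "nat \<Rightarrow> nat \<Rightarrow> nat set \<Rightarrow> nat" where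
  "cnt i v I = card {a\<in>I. sq a ! i = v}"

definition Tf :: "nat \<Rightarrow> nat set \<Rightarrow> real" where
  "Tf i I = (\<Sum>v\<in>{1..n}. real (cnt i v I) * ln (real (cnt i v I)))"

definition bad :: "nat \<Rightarrow> nat set \<Rightarrow> nat set \<Rightarrow> (nat \<times> nat) set" where
  "bad i I1 I2 = {(s,t). s \<in> I1 \<and> t \<in> I2 \<and> sq t ! i \<le> sq s ! i}"

lemma val: "a < N \<Longrightarrow> i < q \<Longrightarrow> sq a ! i \<in> {1..n}"
  using in_cube[of a] unfolding cube_def by (auto dest: nth_mem)

lemma len: "a < N \<Longrightarrow> length (sq a) = q"
  using in_cube[of a] unfolding cube_def by auto

lemma cnt_union:
  assumes "I1 \<inter> I2 = {}" "finite I1" "finite I2"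
  shows "cnt i v (I1 \<union> I2) = cnt i v I1 + cnt i v I2"
proof -
  have "{a\<in>I1 \<union> I2. sq a ! i = v} = {a\<in>I1. sq a ! i = v} \<union> {a\<in>I2. sq a ! i = v}" by auto
  thus ?thesis unfolding cnt_def using assms by (simp add: card_Un_disjoint disjoint_iff)
qed

lemma Tf_merge:
  assumes "I1 \<inter> I2 = {}" "finite I1" "finite I2"
  shows "Tf i (I1 \<union> I2) = Tf i I1 + Tf i I2 + (\<Sum>v\<in>{1..n}. ell (cnt i v I1) (cnt i v I2))"
  unfolding Tf_def ell_def using cnt_union[OF assms]
  by (simp add: sum.distrib[symmetric] sum_subtractf[symmetric] algebra_simps)

lemma sum_cnt:
  assumes "I \<subseteq> {..<N}" "i < q"
  shows "(\<Sum>v\<in>{1..n}. cnt i v I) = card I"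
  unfolding cnt_def
  by (rule card_sum_all[symmetric]) (use assms val in \<open>auto intro: finite_subset[OF assms(1)]\<close>)

lemma sum_cnt_filter:
  assumes "I \<subseteq> {..<N}" "i < q"
  shows "card {a\<in>I. P (sq a ! i)} = (\<Sum>v\<in>{1..n}. if P v then cnt i v I else 0)"
  unfolding cnt_def
  by (rule card_filter_sum) (use assms val in \<open>auto intro: finite_subset[OF assms(1)]\<close>)

lemma bad_le_one:
  assumes "s < t" "t < N"
  shows "card {i. i < q \<and> sq t ! i \<le> sq s ! i} \<le> 1"
proof -
  have r: "q - 1 \<le> card {i. i < length (sq s) \<and> i < length (sq t) \<and> sq s ! i < sq t ! i}"
    using incr[OF assms] unfolding r_less_def .
  have L: "length (sq s) = q" "length (sq t) = q" using len assms by auto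
  let ?A = "{i. i < q \<and> sq s ! i < sq t ! i}"
  let ?B = "{i. i < q \<and> sq t ! i \<le> sq s ! i}"
  have "?A \<union> ?B = {..<q}" by auto
  moreover have "?A \<inter> ?B = {}" by auto
  ultimately have "card ?A + card ?B = q"
    by (metis card_Un_disjoint card_lessThan finite_Un finite_lessThan)
  thus ?thesis using r L by simp
qed

end


context sctx begin

lemma threshold:
  assumes I1: "I1 \<subseteq> {..<N}" and I2: "I2 \<subseteq> {..<N}" and i: "i < q" and mu: "\<mu> \<ge> 0"
  shows "\<exists>\<theta>. real (card {s\<in>I1. \<theta> < sq s ! i}) \<le> \<mu> \<and>
              \<mu> * real (card {t\<in>I2. sq t ! i \<le> \<theta>}) \<le> real (card (bad i I1 I2))"
proof -
  have fin1: "finite I1" "finite I2" using I1 I2 finite_subset by blast+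
  let ?P = "\<lambda>\<theta>. real (card {s\<in>I1. \<theta> < sq s ! i}) \<le> \<mu>"
  have Pn: "?P n"
  proof -
    have E: "{s\<in>I1. n < sq s ! i} = {}" using val[OF _ i] I1 by fastforce
    show ?thesis by (simp only: E card.empty) (use mu in simp)
  qed
  define \<theta> where "\<theta> = (LEAST \<theta>. ?P \<theta>)"
  have P\<theta>: "?P \<theta>" unfolding \<theta>_def by (rule LeastI[of ?P, OF Pn])
  show ?thesis
  proof (cases "\<theta> = 0")
    case True
    have E: "{t\<in>I2. sq t ! i \<le> \<theta>} = {}" using val[OF _ i] I2 True by fastforce
    show ?thesis using P\<theta> by (intro exI[of _ \<theta>]) (simp only: E card.empty, simp)
  next
    case False
    have notP: "\<not> ?P (\<theta> - 1)"
    proof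
      assume "?P (\<theta> - 1)"
      hence "\<theta> \<le> \<theta> - 1" unfolding \<theta>_def by (rule Least_le)
      thus False using False by simp
    qed
    have eqA: "{s\<in>I1. \<theta> - 1 < sq s ! i} = {s\<in>I1. \<theta> \<le> sq s ! i}" using False by auto
    let ?A = "{s\<in>I1. \<theta> \<le> sq s ! i}"
    let ?B = "{t\<in>I2. sq t ! i \<le> \<theta>}"
    have gt: "real (card ?A) > \<mu>" using notP eqA by simp
    have sub: "?A \<times> ?B \<subseteq> bad i I1 I2" unfolding bad_def by auto
    have "bad i I1 I2 \<subseteq> I1 \<times> I2" unfolding bad_def by auto
    hence finb: "finite (bad i I1 I2)" using fin1 by (meson finite_SigmaI finite_subset)
    have "card (?A \<times> ?B) \<le> card (bad i I1 I2)" by (rule card_mono[OF finb sub])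
    hence "real (card ?A) * real (card ?B) \<le> real (card (bad i I1 I2))"
      by (simp add: card_cartesian_product of_nat_mult[symmetric] del: of_nat_mult)
    moreover have "\<mu> * real (card ?B) \<le> real (card ?A) * real (card ?B)"
      using gt by (intro mult_right_mono) auto
    ultimately show ?thesis using P\<theta> by (intro exI[of _ \<theta>]) auto
  qed
qed

lemma loss_coord:
  fixes e \<mu> :: real
  assumes I1: "I1 \<subseteq> {..<N}" and I2: "I2 \<subseteq> {..<N}" and i: "i < q" and mu: "\<mu> > 0"
    and e: "0 < e" "e \<le> 1"
  shows "(\<Sum>v\<in>{1..n}. ell (cnt i v I1) (cnt i v I2))
         \<le> e * (card I1 + card I2) + ln (1/e) * (\<mu> + card (bad i I1 I2) / \<mu>)"
proof -
  obtain \<theta> where th1: "real (card {s\<in>I1. \<theta> < sq s ! i}) \<le> \<mu>"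
    and th2: "\<mu> * real (card {t\<in>I2. sq t ! i \<le> \<theta>}) \<le> real (card (bad i I1 I2))"
    using threshold[OF I1 I2 i, of \<mu>] mu by auto
  have L0: "ln (1/e) \<ge> 0" using e by simp
  have "(\<Sum>v\<in>{1..n}. ell (cnt i v I1) (cnt i v I2))
      \<le> (\<Sum>v\<in>{1..n}. e * real (cnt i v I1 + cnt i v I2) +
            ln (1/e) * real (if v \<le> \<theta> then cnt i v I2 else cnt i v I1))"
    by (rule sum_mono) (use ell_bound[OF e] ell_bound2[OF e] in auto)
  also have "\<dots> = (\<Sum>v\<in>{1..n}. e * real (cnt i v I1) + e * real (cnt i v I2) +
            ln (1/e) * real (if v \<le> \<theta> then cnt i v I2 else 0) + ln (1/e) * real (if \<theta> < v then cnt i v I1 else 0))"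
    by (rule sum.cong) (auto simp: algebra_simps)
  also have "\<dots> = e * (\<Sum>v\<in>{1..n}. real (cnt i v I1)) + e * (\<Sum>v\<in>{1..n}. real (cnt i v I2)) +
            ln (1/e) * (\<Sum>v\<in>{1..n}. real (if v \<le> \<theta> then cnt i v I2 else 0)) +
            ln (1/e) * (\<Sum>v\<in>{1..n}. real (if \<theta> < v then cnt i v I1 else 0))"
    by (simp add: sum.distrib sum_distrib_left)
  also have "(\<Sum>v\<in>{1..n}. real (cnt i v I1)) = card I1"
    using sum_cnt[OF I1 i] by (simp add: of_nat_sum[symmetric] del: of_nat_sum)
  also have "(\<Sum>v\<in>{1..n}. real (cnt i v I2)) = card I2"
    using sum_cnt[OF I2 i] by (simp add: of_nat_sum[symmetric] del: of_nat_sum)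
  also have "(\<Sum>v\<in>{1..n}. real (if v \<le> \<theta> then cnt i v I2 else 0)) = card {t\<in>I2. sq t ! i \<le> \<theta>}"
    using sum_cnt_filter[OF I2 i, of "\<lambda>v. v \<le> \<theta>"] by (simp add: of_nat_sum[symmetric] del: of_nat_sum of_nat_eq_iff)
  also have "(\<Sum>v\<in>{1..n}. real (if \<theta> < v then cnt i v I1 else 0)) = card {s\<in>I1. \<theta> < sq s ! i}"
    using sum_cnt_filter[OF I1 i, of "\<lambda>v. \<theta> < v"] by (simp add: of_nat_sum[symmetric] del: of_nat_sum of_nat_eq_iff)
  finally have 1: "(\<Sum>v\<in>{1..n}. ell (cnt i v I1) (cnt i v I2)) \<le>
     e * real (card I1 + card I2) + ln (1/e) * (real (card {t\<in>I2. sq t ! i \<le> \<theta>}) + real (card {s\<in>I1. \<theta> < sq s ! i}))"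
    by (simp add: algebra_simps)
  have "real (card {t\<in>I2. sq t ! i \<le> \<theta>}) \<le> card (bad i I1 I2) / \<mu>"
    using th2 mu by (simp add: field_simps)
  hence "real (card {t\<in>I2. sq t ! i \<le> \<theta>}) + real (card {s\<in>I1. \<theta> < sq s ! i}) \<le> \<mu> + card (bad i I1 I2) / \<mu>"
    using th1 by linarith
  hence "ln (1/e) * (real (card {t\<in>I2. sq t ! i \<le> \<theta>}) + real (card {s\<in>I1. \<theta> < sq s ! i})) \<le> ln (1/e) * (\<mu> + card (bad i I1 I2) / \<mu>)"
    using L0 by (rule mult_left_mono)
  thus ?thesis using 1 by simp
qed

lemma sum_bad:
  assumes I1: "I1 \<subseteq> {..<N}" and I2: "I2 \<subseteq> {..<N}" and lt: "\<forall>s\<in>I1. \<forall>t\<in>I2. s < t"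
  shows "(\<Sum>i<q. card (bad i I1 I2)) \<le> card I1 * card I2"
proof -
  have fin: "finite I1" "finite I2" using I1 I2 finite_subset by blast+
  have "(\<Sum>i<q. card (bad i I1 I2)) = (\<Sum>i<q. \<Sum>p\<in>I1 \<times> I2. if sq (snd p) ! i \<le> sq (fst p) ! i then 1 else 0)"
  proof (rule sum.cong[OF refl])
    fix i
    have "bad i I1 I2 = {p \<in> I1 \<times> I2. sq (snd p) ! i \<le> sq (fst p) ! i}" unfolding bad_def by auto
    thus "card (bad i I1 I2) = (\<Sum>p\<in>I1 \<times> I2. if sq (snd p) ! i \<le> sq (fst p) ! i then 1 else 0)"
      using fin by (simp add: sum.If_cases Int_def)
  qed
  also have "\<dots> = (\<Sum>p\<in>I1 \<times> I2. \<Sum>i<q. if sq (snd p) ! i \<le> sq (fst p) ! i then 1 else 0)"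
    by (rule sum.swap)
  also have "\<dots> \<le> (\<Sum>p\<in>I1 \<times> I2. (1::nat))"
  proof (rule sum_mono)
    fix p assume p: "p \<in> I1 \<times> I2"
    have "(\<Sum>i<q. if sq (snd p) ! i \<le> sq (fst p) ! i then 1 else 0) = card {i. i < q \<and> sq (snd p) ! i \<le> sq (fst p) ! i}"
      by (simp add: sum.If_cases Int_def conj_commute)
    also have "\<dots> \<le> 1" using bad_le_one[of "fst p" "snd p"] p lt I2 by auto
    finally show "(\<Sum>i<q. if sq (snd p) ! i \<le> sq (fst p) ! i then 1 else 0) \<le> (1::nat)" .
  qed
  also have "\<dots> = card I1 * card I2" by (simp add: card_cartesian_product)
  finally show ?thesis .
qed

end


context sctx begin

lemma merge_loss:
  fixes e lam :: real
  assumes m1: "m1 \<ge> 1" and bnd: "lo + m1 + m2 \<le> N" and e: "0 < e" "e \<le> 1" and lam: "lam > 0"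
  shows "(\<Sum>i<q. \<Sum>v\<in>{1..n}. ell (cnt i v {lo..<lo+m1}) (cnt i v {lo+m1..<lo+m1+m2}))
         \<le> real (m1+m2) * (q*e + ln (1/e) * (q*lam + 1/lam))"
proof -
  let ?I1 = "{lo..<lo+m1}" and ?I2 = "{lo+m1..<lo+m1+m2}"
  have I1: "?I1 \<subseteq> {..<N}" and I2: "?I2 \<subseteq> {..<N}" using bnd by auto
  have c1: "card ?I1 = m1" and c2: "card ?I2 = m2" by auto
  define \<mu> where "\<mu> = lam * m1"
  have mu: "\<mu> > 0" using lam m1 by (simp add: \<mu>_def)
  have L0: "ln (1/e) \<ge> 0" using e by simp
  have "(\<Sum>i<q. \<Sum>v\<in>{1..n}. ell (cnt i v ?I1) (cnt i v ?I2))
        \<le> (\<Sum>i<q. e * (m1 + m2) + ln (1/e) * (\<mu> + card (bad i ?I1 ?I2) / \<mu>))"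
    by (rule sum_mono) (use loss_coord[OF I1 I2 _ mu e] c1 c2 in auto)
  also have "\<dots> = q * e * (m1+m2) + ln (1/e) * (q * \<mu> + (\<Sum>i<q. real (card (bad i ?I1 ?I2))) / \<mu>)"
    by (simp add: sum.distrib sum_distrib_left sum_divide_distrib[symmetric] algebra_simps)
  also have "(\<Sum>i<q. real (card (bad i ?I1 ?I2))) \<le> real m1 * real m2"
  proof -
    have "(\<Sum>i<q. card (bad i ?I1 ?I2)) \<le> card ?I1 * card ?I2"
      by (rule sum_bad[OF I1 I2]) auto
    thus ?thesis using c1 c2 by (simp add: of_nat_sum[symmetric] of_nat_mult[symmetric] del: of_nat_sum of_nat_mult)
  qed
  hence "q * e * (m1+m2) + ln (1/e) * (q * \<mu> + (\<Sum>i<q. real (card (bad i ?I1 ?I2))) / \<mu>)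
         \<le> q * e * (m1+m2) + ln (1/e) * (q * \<mu> + (real m1 * real m2) / \<mu>)"
    using mu L0 by (intro add_left_mono mult_left_mono divide_right_mono) auto
  also have "(real m1 * real m2) / \<mu> = m2 / lam" using m1 lam by (simp add: \<mu>_def field_simps)
  also have "q * e * (m1+m2) + ln (1/e) * (q * \<mu> + m2 / lam) \<le> real (m1+m2) * (q*e + ln (1/e) * (q*lam + 1/lam))"
  proof -
    have "q * \<mu> + m2 / lam \<le> (m1 + m2) * (q*lam + 1/lam)"
      using lam by (simp add: \<mu>_def algebra_simps)
    hence "ln (1/e) * (q * \<mu> + m2 / lam) \<le> ln (1/e) * ((m1 + m2) * (q*lam + 1/lam))"
      using L0 by (rule mult_left_mono)
    moreover have "real (m1+m2) * (q*e + ln (1/e) * (q*lam + 1/lam)) = q * e * (m1+m2) + ln (1/e) * ((m1 + m2) * (q*lam + 1/lam))"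
      by (simp add: algebra_simps add_divide_distrib)
    ultimately show ?thesis by linarith
  qed
  finally show ?thesis by simp
qed

lemma xlnx01: "c \<le> 1 \<Longrightarrow> real c * ln (real c) = 0"
  by (cases c) auto

lemma Tf_small:
  assumes "I \<subseteq> {..<N}" "card I \<le> 1"
  shows "Tf i I = 0"
proof -
  have fin: "finite I" using assms(1) finite_subset by blast
  have "cnt i v I \<le> card I" for v unfolding cnt_def by (rule card_mono[OF fin]) auto
  hence "\<And>v. cnt i v I \<le> 1" using assms(2) le_trans by blast
  thus ?thesis unfolding Tf_def by (simp add: xlnx01)
qed

lemma tree:
  fixes e lam :: real
  assumes e: "0 < e" "e \<le> 1" and lam: "lam > 0"
  shows "\<forall>lo m. m \<le> 2^k \<longrightarrow> lo + m \<le> N \<longrightarrow>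
           (\<Sum>i<q. Tf i {lo..<lo+m}) \<le> (q*e + ln (1/e) * (q*lam + 1/lam)) * m * k"
proof (induction k)
  case 0
  show ?case
  proof (intro allI impI)
    fix lo m :: nat assume "m \<le> 2^0" "lo + m \<le> N"
    hence "\<And>i. Tf i {lo..<lo+m} = 0" by (intro Tf_small) auto
    thus "(\<Sum>i<q. Tf i {lo..<lo+m}) \<le> (q*e + ln (1/e) * (q*lam + 1/lam)) * real m * real (0::nat)" by simp
  qed
next
    case (Suc k)
    let ?c = "q*e + ln (1/e) * (q*lam + 1/lam)"
    have c0: "?c \<ge> 0" using e lam by (intro add_nonneg_nonneg mult_nonneg_nonneg) auto
    show ?case
    proof (intro allI impI)
      fix lo m :: nat assume mk: "m \<le> 2^Suc k" and b: "lo + m \<le> N"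
      show "(\<Sum>i<q. Tf i {lo..<lo+m}) \<le> ?c * m * Suc k"
      proof (cases "m \<le> 1")
        case True
        hence "\<And>i. Tf i {lo..<lo+m} = 0" using b by (intro Tf_small) auto
        thus ?thesis using c0 by simp
      next
        case False
        define m1 where "m1 = m div 2"
        define m2 where "m2 = m - m1"
        have m1: "m1 \<ge> 1" "m1 \<le> 2^k" using False mk by (auto simp: m1_def)
        have m2: "m2 \<le> 2^k" using mk by (simp add: m1_def m2_def)
        have mm: "m = m1 + m2" by (simp add: m1_def m2_def)
        have U: "{lo..<lo+m} = {lo..<lo+m1} \<union> {lo+m1..<lo+m1+m2}" using mm by auto
        have split: "\<And>i. Tf i {lo..<lo+m} = Tf i {lo..<lo+m1} + Tf i {lo+m1..<lo+m1+m2} +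
             (\<Sum>v\<in>{1..n}. ell (cnt i v {lo..<lo+m1}) (cnt i v {lo+m1..<lo+m1+m2}))"
          unfolding U by (rule Tf_merge) auto
        have "(\<Sum>i<q. Tf i {lo..<lo+m}) = (\<Sum>i<q. Tf i {lo..<lo+m1}) + (\<Sum>i<q. Tf i {lo+m1..<lo+m1+m2}) +
             (\<Sum>i<q. \<Sum>v\<in>{1..n}. ell (cnt i v {lo..<lo+m1}) (cnt i v {lo+m1..<lo+m1+m2}))"
          by (simp add: split sum.distrib)
        also have "\<dots> \<le> ?c * m1 * k + ?c * m2 * k + real (m1+m2) * ?c"
        proof -
          have "(\<Sum>i<q. Tf i {lo..<lo+m1}) \<le> ?c * m1 * k" using Suc.IH m1 b mm by auto
          moreover have "(\<Sum>i<q. Tf i {lo+m1..<lo+m1+m2}) \<le> ?c * m2 * k"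
            using Suc.IH[rule_format, of m2 "lo+m1"] m2 b mm by auto
          moreover have "(\<Sum>i<q. \<Sum>v\<in>{1..n}. ell (cnt i v {lo..<lo+m1}) (cnt i v {lo+m1..<lo+m1+m2})) \<le> real (m1+m2) * ?c"
            by (rule merge_loss[OF m1(1) _ e lam]) (use b mm in simp)
          ultimately show ?thesis by linarith
        qed
        also have "\<dots> = ?c * m * Suc k" using mm by (simp add: algebra_simps add_divide_distrib)
        finally show ?thesis .
      qed
    qed
qed

lemma Tf_lower:
  assumes N: "N \<ge> 1" and n: "n \<ge> 1" and i: "i < q"
  shows "Tf i {0..<N} \<ge> N * (ln N - ln n)"
proof -
  have "Tf i {0..<N} \<ge> (\<Sum>v\<in>{1..n}. real (cnt i v {0..<N}) * (ln N - ln n) + real (cnt i v {0..<N}) - N / n)"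
    unfolding Tf_def by (rule sum_mono) (rule xlnx_lower, use N n in auto)
  also have "(\<Sum>v\<in>{1..n}. real (cnt i v {0..<N}) * (ln N - ln n) + real (cnt i v {0..<N}) - N / n)
      = (\<Sum>v\<in>{1..n}. real (cnt i v {0..<N})) * (ln N - ln n) + (\<Sum>v\<in>{1..n}. real (cnt i v {0..<N})) - n * (N / n)"
    by (simp add: sum.distrib sum_subtractf sum_distrib_right)
  also have "(\<Sum>v\<in>{1..n}. real (cnt i v {0..<N})) = N"
  proof -
    have "{0..<N} \<subseteq> {..<N}" by auto
    from sum_cnt[OF this i] show ?thesis by (simp add: of_nat_sum[symmetric] del: of_nat_sum)
  qed
  finally show ?thesis using n by simp
qed

lemma main_ineq:
  fixes e lam :: real
  assumes e: "0 < e" "e \<le> 1" and lam: "lam > 0" and N: "N \<ge> 1" and n: "n \<ge> 1" and k: "N \<le> 2^k"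
  shows "q * (ln N - ln n) \<le> (q*e + ln (1/e) * (q*lam + 1/lam)) * k"
proof -
  let ?c = "q*e + ln (1/e) * (q*lam + 1/lam)"
  have "(\<Sum>i<q. Tf i {0..<N}) \<le> ?c * N * k" using tree[OF e lam, of k, rule_format, of N 0] k by (simp only: add_0 le_refl simp_thms)
  moreover have "(\<Sum>i<q. Tf i {0..<N}) \<ge> (\<Sum>i<q. N * (ln N - ln n))"
    by (rule sum_mono) (rule Tf_lower[OF N n], simp)
  moreover have "(\<Sum>i<q. N * (ln N - ln n)) = N * (q * (ln N - ln n))" by simp
  moreover have "?c * N * k = N * (?c * k)" by (simp only: mult_ac)
  ultimately have "N * (q * (ln N - ln n)) \<le> N * (?c * k)" by linarith
  moreover have "real N > 0" using N by simp
  ultimately show ?thesis using mult_le_cancel_left_pos by blast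
qed

end


lemma rl_iff: "length x = q \<Longrightarrow> length y = q \<Longrightarrow>
   r_less r x y \<longleftrightarrow> r \<le> card {i. i < q \<and> x!i < y!i}"
  by (simp add: r_less_def)

lemma card_sub_q: "card {i. i < q \<and> P i} \<le> q"
proof -
  have "{i. i < q \<and> P i} \<subseteq> {..<q}" by auto
  thus ?thesis using card_mono[of "{..<q}"] by fastforce
qed

lemma rl_asym:
  assumes "q \<ge> 3" "length x = q" "length y = q" "r_less (q-1) x y"
  shows "\<not> r_less (q-1) y x"
proof
  assume yx: "r_less (q-1) y x"
  let ?A = "{i. i < q \<and> x!i < y!i}" and ?B = "{i. i < q \<and> y!i < x!i}"
  have a: "q - 1 \<le> card ?A" using assms rl_iff by blast
  have b: "q - 1 \<le> card ?B" using assms yx rl_iff by blast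
  have "card ?A + card ?B = card (?A \<union> ?B)"
    by (rule card_Un_disjoint[symmetric]) auto
  also have "?A \<union> ?B = {i. i < q \<and> (x!i < y!i \<or> y!i < x!i)}" by auto
  also have "card \<dots> \<le> q" by (rule card_sub_q)
  finally show False using a b assms(1) by linarith
qed

lemma rl_irrefl: "q \<ge> 2 \<Longrightarrow> length x = q \<Longrightarrow> \<not> r_less (q-1) x x"
  by (simp add: rl_iff)

lemma rl_trans:
  assumes q: "q \<ge> 4" and L: "length x = q" "length y = q" "length z = q"
    and xy: "r_less (q-1) x y" and yz: "r_less (q-1) y z"
    and tot: "x \<noteq> z \<longrightarrow> r_less (q-1) x z \<or> r_less (q-1) z x"
  shows "r_less (q-1) x z"
proof -
  have xz: "x \<noteq> z"
  proof
    assume "x = z"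
    thus False using rl_asym[of q y x] q L xy yz by auto
  qed
  show ?thesis
  proof (rule ccontr)
    assume nxz: "\<not> r_less (q-1) x z"
    hence zx: "r_less (q-1) z x" using tot xz by auto
    let ?A = "{i. i < q \<and> x!i < y!i}" and ?B = "{i. i < q \<and> y!i < z!i}"
    let ?C = "{i. i < q \<and> z!i < x!i}"
    have a: "q - 1 \<le> card ?A" using L xy rl_iff by blast
    have b: "q - 1 \<le> card ?B" using L yz rl_iff by blast
    have c: "q - 1 \<le> card ?C" using L zx rl_iff by blast
    have "card ?A + card ?B = card (?A \<union> ?B) + card (?A \<inter> ?B)"
      by (rule card_Un_Int) auto
    moreover have "card (?A \<union> ?B) \<le> q"
    proof -
      have "?A \<union> ?B = {i. i < q \<and> (x!i < y!i \<or> y!i < z!i)}" by auto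
      thus ?thesis using card_sub_q by simp
    qed
    ultimately have ab: "card (?A \<inter> ?B) \<ge> q - 2" using a b q by linarith
    have "card (?A \<inter> ?B) + card ?C = card ((?A \<inter> ?B) \<union> ?C)"
      by (rule card_Un_disjoint[symmetric]) auto
    also have "card ((?A \<inter> ?B) \<union> ?C) \<le> q"
    proof -
      have "(?A \<inter> ?B) \<union> ?C = {i. i < q \<and> ((x!i < y!i \<and> y!i < z!i) \<or> z!i < x!i)}" by auto
      thus ?thesis using card_sub_q by simp
    qed
    finally show False using ab c q by linarith
  qed
qed

lemma exists_seq:
  assumes q: "q \<ge> 4" and S: "S \<subseteq> cube q n" "finite S"
    and comp: "\<forall>x\<in>S. \<forall>y\<in>S. x \<noteq> y \<longrightarrow> r_less (q-1) x y \<or> r_less (q-1) y x"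
  shows "\<exists>sq. sctx sq (card S) q n"
proof -
  let ?R = "\<lambda>x y. r_less (q-1) x y"
  have L: "\<And>x. x \<in> S \<Longrightarrow> length x = q" using S unfolding cube_def by auto
  define rk where "rk x = card {y\<in>S. ?R y x}" for x
  have mono: "rk x < rk y" if "x \<in> S" "y \<in> S" "?R x y" for x y
  proof -
    have "{z\<in>S. ?R z x} \<subset> {z\<in>S. ?R z y}"
    proof
      show "{z\<in>S. ?R z x} \<subseteq> {z\<in>S. ?R z y}"
        using rl_trans[OF q L L L] that comp by blast
      show "{z\<in>S. ?R z x} \<noteq> {z\<in>S. ?R z y}"
        using that rl_irrefl[of q x] q L by auto
    qed
    thus ?thesis unfolding rk_def by (rule psubset_card_mono[rotated]) (use S in auto)
  qed
  have inj: "inj_on rk S"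
  proof (rule inj_onI)
    fix x y assume "x \<in> S" "y \<in> S" "rk x = rk y"
    thus "x = y" using mono comp by (metis less_irrefl)
  qed
  have rng: "rk x < card S" if "x \<in> S" for x
  proof -
    have "{z\<in>S. ?R z x} \<subseteq> S - {x}" using rl_irrefl[of q x] q L that by auto
    hence "rk x \<le> card (S - {x})" unfolding rk_def by (rule card_mono[rotated]) (use S in auto)
    thus ?thesis using that S card_Diff1_less by fastforce
  qed
  have img: "rk ` S = {..<card S}"
  proof (rule card_subset_eq)
    show "finite {..<card S}" by simp
    show "rk ` S \<subseteq> {..<card S}" using rng by auto
    show "card (rk ` S) = card {..<card S}" using card_image[OF inj] by simp
  qed
  define sq where "sq = inv_into S rk"
  have sqS: "sq a \<in> S" if "a < card S" for a
    unfolding sq_def using img that by (metis inv_into_into lessThan_iff)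
  have rksq: "rk (sq a) = a" if "a < card S" for a
    unfolding sq_def using img that by (metis f_inv_into_f lessThan_iff)
  have "sctx sq (card S) q n"
  proof
    fix a assume "a < card S" thus "sq a \<in> cube q n" using sqS S by auto
  next
    fix a b assume ab: "a < b" "b < card S"
    hence "sq a \<in> S" "sq b \<in> S" using sqS by auto
    moreover have "sq a \<noteq> sq b" using rksq ab by (metis less_trans less_irrefl)
    moreover have "\<not> ?R (sq b) (sq a)"
      using mono[of "sq b" "sq a"] rksq ab \<open>sq a \<in> S\<close> \<open>sq b \<in> S\<close> by fastforce
    ultimately show "?R (sq a) (sq b)" using comp by blast
  qed
  thus ?thesis by blast
qed

lemma card_sq_bound:
  assumes q: "q \<ge> 2" and S: "S \<subseteq> cube q n"
    and comp: "\<forall>x\<in>S. \<forall>y\<in>S. x \<noteq> y \<longrightarrow> r_less (q-1) x y \<or> r_less (q-1) y x"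
  shows "card S \<le> n^2"
proof -
  let ?f = "\<lambda>x. (x!0, x!1)"
  have L: "\<And>x. x \<in> S \<Longrightarrow> length x = q \<and> set x \<subseteq> {1..n}" using S unfolding cube_def by auto
  have inj: "inj_on ?f S"
  proof (rule inj_onI)
    fix x y assume xy: "x \<in> S" "y \<in> S" "?f x = ?f y"
    show "x = y"
    proof (rule ccontr)
      assume ne: "x \<noteq> y"
      have key: "\<not> r_less (q-1) u v" if "length u = q" "length v = q" "u!0 = v!0" "u!1 = v!1" for u v
      proof
        assume "r_less (q-1) u v"
        hence c: "q - 1 \<le> card {i. i < q \<and> u!i < v!i}" using that rl_iff by blast
        have "{i. i < q \<and> u!i < v!i} \<subseteq> {2..<q}" using that by (auto simp: less_Suc_eq nat_less_le)
          (metis One_nat_def Suc_1 Suc_lessI le_less less_Suc0 linorder_not_le not_less_eq)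
        hence "card {i. i < q \<and> u!i < v!i} \<le> q - 2" using card_mono[of "{2..<q}"] by fastforce
        thus False using c q by linarith
      qed
      show False using comp xy ne key L by (metis prod.inject)
    qed
  qed
  have "?f ` S \<subseteq> {1..n} \<times> {1..n}"
  proof
    fix p assume "p \<in> ?f ` S"
    then obtain x where x: "x \<in> S" "p = ?f x" by auto
    have "x!0 \<in> set x" "x!1 \<in> set x" using L[OF x(1)] q by (auto intro!: nth_mem)
    thus "p \<in> {1..n} \<times> {1..n}" using L[OF x(1)] x by auto
  qed
  hence "card (?f ` S) \<le> card ({1..n} \<times> {1..n})" by (rule card_mono[rotated]) auto
  thus ?thesis using card_image[OF inj] by (simp add: card_cartesian_product power2_eq_square)
qed



lemma ln2_ge_half: "ln (2::real) \<ge> 1/2"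
proof -
  have "ln (1/2::real) \<le> 1/2 - 1" by (rule ln_le_minus_one) simp
  moreover have "ln (1/2::real) = - ln 2" by (simp add: ln_div)
  ultimately show ?thesis by linarith
qed

lemma kappa_bound:
  fixes q :: real assumes q: "q \<ge> 4"
  shows "(1 + 2 * ln (sqrt q)) / (sqrt q * ln 2) * sqrt (log 2 q) \<le> 80"
proof -
  define s where "s = sqrt q"
  define w where "w = sqrt s"
  have s2: "s \<ge> 2" unfolding s_def using q real_sqrt_le_mono[of 4 q] by simp
  have w1: "w \<ge> 1" unfolding w_def using s2 by simp
  have sw: "s = w * w" unfolding w_def using s2 by simp
  have qs: "q = s * s" unfolding s_def using q by simp
  have lnw: "ln w \<le> w" using ln_le_minus_one[of w] w1 by simp
  have lns: "ln s = 2 * ln w" using sw w1 by (simp add: ln_mult_pos)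
  have lnq: "ln q = 2 * ln s" using qs s2 by (simp add: ln_mult_pos)
  have l2: "ln (2::real) \<ge> 1/2" by (rule ln2_ge_half)
  have A: "1 + 2 * ln s \<le> 5 * w" using lns lnw w1 by linarith
  have "log 2 q = ln q / ln 2" by (simp add: log_def)
  also have "\<dots> \<le> 4 * w / ln 2" using lnq lns lnw l2 by (intro divide_right_mono) auto
  also have "\<dots> \<le> 8 * w" using l2 w1 by (simp add: field_simps)
  finally have lg: "log 2 q \<le> 8 * w" .
  have r: "sqrt (log 2 q) \<le> 8 * w"
  proof -
    have "sqrt (log 2 q) \<le> sqrt (8 * w)" using lg by (rule real_sqrt_le_mono)
    also have "\<dots> \<le> 8 * w"
    proof -
      have x1: "8 * w \<ge> 1" using w1 by simp
      have "(8*w) * 1 \<le> (8*w) * (8*w)" using x1 by (intro mult_left_mono) auto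
      hence "8*w \<le> (8*w)^2" by (simp add: power2_eq_square)
      hence "sqrt (8*w) \<le> sqrt ((8*w)^2)" by (rule real_sqrt_le_mono)
      also have "\<dots> = 8*w" using x1 by (simp only: real_sqrt_abs)
      finally show ?thesis .
    qed
    finally show ?thesis .
  qed
  have lnpos: "ln s \<ge> 0" using s2 by simp
  have lgpos: "log 2 q \<ge> 0" using q by simp
  have p5: "5*w/(s*ln 2) \<ge> 0" using w1 s2 by simp
  have "(1 + 2 * ln s) / (s * ln 2) * sqrt (log 2 q) \<le> (5 * w) / (s * ln 2) * (8 * w)"
    using A r lnpos s2 l2 lgpos p5 by (intro mult_mono divide_right_mono) auto
  also have "\<dots> = 40 / ln 2" using sw w1 l2 by (simp add: field_simps)
  also have "\<dots> \<le> 80" using l2 by (simp add: field_simps)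
  finally show ?thesis unfolding s_def .
qed

lemma final_real:
  fixes LN Ln k :: real
  assumes "LN - Ln \<le> k * (LN + ln 2)" "0 \<le> k" "k \<le> 1/2" "Ln \<ge> ln 2" "LN \<ge> 0"
  shows "LN \<le> Ln * (1 + 4 * k)"
proof -
  have Ln0: "Ln \<ge> 0" using assms(4) ln_ge_zero[of "2::real"] by linarith
  have "LN * (1 - k) \<le> Ln + k * ln 2" using assms(1) by (simp add: algebra_simps)
  also have "\<dots> \<le> Ln + k * Ln" using assms by (intro add_left_mono mult_left_mono) auto
  also have "\<dots> \<le> Ln * (1 + 4 * k) * (1 - k)"
  proof -
    have "Ln * (1 + 4 * k) * (1 - k) - (Ln + k * Ln) = Ln * (2 * k * (1 - 2 * k))" by (simp add: algebra_simps)
    moreover have "Ln * (2 * k * (1 - 2 * k)) \<ge> 0" using assms Ln0 by (intro mult_nonneg_nonneg) auto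
    ultimately show ?thesis by linarith
  qed
  finally have "LN * (1 - k) \<le> Ln * (1 + 4 * k) * (1 - k)" .
  moreover have "1 - k > 0" using assms by simp
  ultimately show ?thesis by simp
qed



lemma finite_cube: "finite (cube q n)"
proof -
  have "cube q n = {xs. set xs \<subseteq> {1..n} \<and> length xs = q}" unfolding cube_def by auto
  thus ?thesis using finite_lists_length_eq[of "{1..n}" q] by simp
qed

lemma exists_k: "N \<ge> (1::nat) \<Longrightarrow> \<exists>k. N \<le> 2^k \<and> 2^k < 2*N"
proof -
  assume N: "N \<ge> 1"
  define k where "k = (LEAST k. N \<le> 2^k)"
  have ex: "N \<le> 2^N" using less_exp[of N] by simp
  have k1: "N \<le> 2^k" unfolding k_def by (rule LeastI[of "\<lambda>k. N \<le> 2^k", OF ex])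
  have k2: "2^k < 2*N"
  proof (cases k)
    case 0 thus ?thesis using N by simp
  next
    case (Suc j)
    have "\<not> N \<le> 2^j"
    proof
      assume "N \<le> 2^j"
      hence "k \<le> j" unfolding k_def by (rule Least_le)
      thus False using Suc by simp
    qed
    thus ?thesis using Suc by simp
  qed
  show ?thesis using k1 k2 by blast
qed

lemma set_bound:
  assumes q: "q \<ge> 4" and n: "n \<ge> 1" and S: "S \<subseteq> cube q n"
    and comp: "\<forall>x\<in>S. \<forall>y\<in>S. x \<noteq> y \<longrightarrow> r_less (q-1) x y \<or> r_less (q-1) y x"
  shows "real (card S) \<le> real n powr (1 + 400 / sqrt (log 2 (real q)))"
proof -
  define E where "E = 400 / sqrt (log 2 (real q))"
  have lq: "log 2 (real q) \<ge> 2"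
  proof -
    have "log 2 (real q) \<ge> log 2 4" using q by simp
    moreover have "log 2 (4::real) = 2"
      by (metis log2_of_power_eq numeral_Bit0_eq_double numeral_One power2_eq_square power_one_right mult_2 num_double of_nat_numeral)
    ultimately show ?thesis by simp
  qed
  have rpos: "sqrt (log 2 (real q)) > 0" using lq by simp
  have E0: "E \<ge> 0" unfolding E_def using rpos by simp
  have fin: "finite S" using S finite_cube finite_subset by blast
  have sqb: "card S \<le> n^2" by (rule card_sq_bound) (use q S comp in auto)
  show ?thesis
  proof (cases "n = 1")
    case True
    hence "card S \<le> 1" using sqb by simp
    thus ?thesis using True by simp
  next
    case False
    hence n2: "n \<ge> 2" using n by simp
    show ?thesis
    proof (cases "E \<ge> 1")
      case True
      have "real (card S) \<le> real n ^ 2" using sqb by (simp add: of_nat_power[symmetric] del: of_nat_power)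
      also have "\<dots> = real n powr (real (2::nat))" using n by (simp add: powr_realpow)
      also have "\<dots> \<le> real n powr (1 + E)" using True n by (intro powr_mono) auto
      finally show ?thesis unfolding E_def .
    next
      case False
      hence E1: "E < 1" by simp
      show ?thesis
      proof (cases "card S = 0")
        case True thus ?thesis by simp
      next
        case False
        define N where "N = card S"
        have N1: "N \<ge> 1" using False by (simp add: N_def)
        obtain sq where ctx: "sctx sq N q n" using exists_seq[OF q S fin comp] by (auto simp: N_def)
        define s where "s = sqrt (real q)"
        have s2: "s \<ge> 2" unfolding s_def using q real_sqrt_le_mono[of 4 "real q"] by simp
        have qs: "real q = s * s" unfolding s_def by simp
        obtain k where k1: "N \<le> 2^k" and k2: "2^k < 2*N" using exists_k[OF N1] by blast
        have e1: "0 < 1/s" "1/s \<le> 1" using s2 by auto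
        have lam: "1/s > 0" using s2 by simp
        have MI: "real q * (ln N - ln n) \<le> (real q * (1/s) + ln (1/(1/s)) * (real q * (1/s) + 1/(1/s))) * k"
          by (rule sctx.main_ineq[OF ctx e1 lam N1 n k1])
        have c_eq: "real q * (1/s) + ln (1/(1/s)) * (real q * (1/s) + 1/(1/s)) = s * (1 + 2 * ln s)"
          using s2 qs by (simp add: field_simps)
        have kln: "real k * ln 2 \<le> ln N + ln 2"
        proof -
          have "real k * ln 2 = ln ((2::real)^k)" by (simp add: ln_realpow)
          also have "\<dots> \<le> ln (2 * real N)"
          proof -
            have "real (2^k) \<le> real (2*N)" using k2 by linarith
            thus ?thesis using N1 by (subst ln_le_cancel_iff) auto
          qed
          also have "\<dots> = ln N + ln 2" using N1 by (simp add: ln_mult_pos)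
          finally show ?thesis .
        qed
        define \<kappa> where "\<kappa> = (1 + 2 * ln s) / (s * ln 2)"
        have lns0: "ln s \<ge> 0" using s2 by simp
        have step: "ln N - ln n \<le> \<kappa> * (ln N + ln 2)"
        proof -
          have "s * s * (ln N - ln n) \<le> s * (1 + 2 * ln s) * k" using MI c_eq qs by simp
          hence "s * (ln N - ln n) \<le> (1 + 2 * ln s) * k" using s2 by (simp add: mult.assoc)
          hence "ln N - ln n \<le> (1 + 2 * ln s) * k / s" using s2 by (simp add: field_simps)
          also have "(1 + 2 * ln s) * k / s = ((1 + 2 * ln s) / (s * ln 2)) * (k * ln 2)"
            using s2 by (simp add: field_simps)
          also have "\<dots> \<le> ((1 + 2 * ln s) / (s * ln 2)) * (ln N + ln 2)"
            using kln lns0 s2 by (intro mult_left_mono) auto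
          finally show ?thesis unfolding \<kappa>_def .
        qed
        have kb: "\<kappa> * sqrt (log 2 (real q)) \<le> 80"
          using kappa_bound[of "real q"] q unfolding \<kappa>_def s_def by simp
        have r400: "sqrt (log 2 (real q)) > 400" using E1 rpos unfolding E_def by (simp add: field_simps)
        have k0: "\<kappa> \<ge> 0" unfolding \<kappa>_def using lns0 s2 by simp
        have kE: "4 * \<kappa> \<le> E"
        proof -
          have "\<kappa> \<le> 80 / sqrt (log 2 (real q))" using kb rpos by (simp add: field_simps)
          hence "4 * \<kappa> \<le> 320 / sqrt (log 2 (real q))" by simp
          also have "\<dots> \<le> E" unfolding E_def using rpos by (simp add: divide_right_mono)
          finally show ?thesis .
        qed
        have khalf: "\<kappa> \<le> 1/2" using kE E1 by simp
        have lnn2: "ln (real n) \<ge> ln 2" using n2 by simp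
        have lnN0: "ln (real N) \<ge> 0" using N1 by simp
        have "ln (real N) \<le> ln n * (1 + 4 * \<kappa>)" by (rule final_real[OF step k0 khalf lnn2 lnN0])
        also have "\<dots> \<le> ln n * (1 + E)" using kE lnn2 ln_ge_zero[of "real n"] n by (intro mult_left_mono) auto
        finally have "ln (real N) \<le> (1 + E) * ln n" by (simp add: mult.commute)
        hence "exp (ln (real N)) \<le> exp ((1 + E) * ln n)" by simp
        hence "real N \<le> real n powr (1 + E)" using N1 n by (simp add: powr_def)
        thus ?thesis unfolding N_def E_def .
      qed
    qed
  qed
qed



lemma G_facts:
  assumes "q \<ge> 2"
  shows "finite {card S | S. S \<subseteq> cube q n \<and>
      (\<forall>x\<in>S. \<forall>y\<in>S. x \<noteq> y \<longrightarrow> r_less (q-1) x y \<or> r_less (q-1) y x)}"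
    and "\<exists>S. G q (q-1) n = card S \<and> S \<subseteq> cube q n \<and>
      (\<forall>x\<in>S. \<forall>y\<in>S. x \<noteq> y \<longrightarrow> r_less (q-1) x y \<or> r_less (q-1) y x)"
proof -
  let ?G = "{card S | S. S \<subseteq> cube q n \<and>
      (\<forall>x\<in>S. \<forall>y\<in>S. x \<noteq> y \<longrightarrow> r_less (q-1) x y \<or> r_less (q-1) y x)}"
  have "?G \<subseteq> {..card (cube q n)}" using card_mono[OF finite_cube] by auto
  thus fin: "finite ?G" using finite_subset by blast
  have "card ({}::nat list set) \<in> ?G" by blast
  hence ne: "?G \<noteq> {}" by blast
  have "G q (q-1) n \<in> ?G" unfolding G_def by (rule Max_in[OF fin ne])
  thus "\<exists>S. G q (q-1) n = card S \<and> S \<subseteq> cube q n \<and>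
      (\<forall>x\<in>S. \<forall>y\<in>S. x \<noteq> y \<longrightarrow> r_less (q-1) x y \<or> r_less (q-1) y x)" by auto
qed

lemma F_le_G:
  assumes q: "q \<ge> 2"
  shows "F q (q-1) n \<le> G q (q-1) n"
proof -
  let ?G = "{card S | S. S \<subseteq> cube q n \<and>
      (\<forall>x\<in>S. \<forall>y\<in>S. x \<noteq> y \<longrightarrow> r_less (q-1) x y \<or> r_less (q-1) y x)}"
  let ?F = "{N. \<exists>x :: nat \<Rightarrow> nat list.
      (\<forall>a\<in>{1..N}. x a \<in> cube q n) \<and>
      (\<forall>a b. 1 \<le> a \<and> a < b \<and> b \<le> N \<longrightarrow> r_less (q-1) (x a) (x b))}"
  have finG: "finite ?G" by (rule G_facts(1)[OF q])
  have inG: "N \<in> ?G" if "N \<in> ?F" for N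
  proof -
    obtain x where x1: "\<forall>a\<in>{1..N}. x a \<in> cube q n"
      and x2: "\<forall>a b. 1 \<le> a \<and> a < b \<and> b \<le> N \<longrightarrow> r_less (q-1) (x a) (x b)"
      using \<open>N \<in> ?F\<close> by blast
    have L: "\<And>a. a \<in> {1..N} \<Longrightarrow> length (x a) = q" using x1 unfolding cube_def by auto
    have inj: "inj_on x {1..N}"
    proof (rule inj_onI)
      fix a b assume ab: "a \<in> {1..N}" "b \<in> {1..N}" "x a = x b"
      show "a = b"
      proof (rule ccontr)
        assume "a \<noteq> b"
        hence "r_less (q-1) (x a) (x b) \<or> r_less (q-1) (x b) (x a)" using x2 ab
          by (metis atLeastAtMost_iff linorder_neqE_nat)
        thus False using rl_irrefl[OF q L[OF ab(1)]] ab(3) by auto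
      qed
    qed
    have A: "x ` {1..N} \<subseteq> cube q n" using x1 by auto
    have B: "\<forall>u\<in>x ` {1..N}. \<forall>v\<in>x ` {1..N}. u \<noteq> v \<longrightarrow> r_less (q-1) u v \<or> r_less (q-1) v u"
    proof (intro ballI impI)
      fix u v assume "u \<in> x ` {1..N}" "v \<in> x ` {1..N}" "u \<noteq> v"
      then obtain a b where ab: "a \<in> {1..N}" "b \<in> {1..N}" "u = x a" "v = x b" "a \<noteq> b" by blast
      show "r_less (q-1) u v \<or> r_less (q-1) v u"
      proof (cases "a < b")
        case True thus ?thesis using x2 ab by auto
      next
        case False hence "b < a" using ab by simp
        thus ?thesis using x2 ab by auto
      qed
    qed
    have C: "card (x ` {1..N}) = N" using card_image[OF inj] by simp
    show ?thesis
      by (rule CollectI, rule exI[of _ "x ` {1..N}"], intro conjI, rule C[symmetric], rule A, rule B)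
  qed
  have "?F \<subseteq> ?G" using inG by blast
  hence finF: "finite ?F" using finG finite_subset by blast
  have "0 \<in> ?F" by auto
  hence neF: "?F \<noteq> {}" by blast
  have "Max ?F \<le> Max ?G"
    by (rule Max.boundedI[OF finF neF]) (rule Max_ge[OF finG], rule inG)
  thus ?thesis unfolding F_def G_def .
qed

theorem theorem1p2:
  shows "(\<exists>C::real. C > 0 \<and>
           (\<forall>q n::nat. q \<ge> 4 \<longrightarrow> n \<ge> 1 \<longrightarrow>
              F q (q - 1) n \<le> G q (q - 1) n \<and>
              real (G q (q - 1) n) \<le> real n powr (1 + C / sqrt (log 2 (real q)))))
      \<and> (\<forall>\<epsilon>::real. \<epsilon> > 0 \<longrightarrow> (\<exists>q0::nat. \<forall>q n::nat. q \<ge> q0 \<longrightarrow> n \<ge> 1 \<longrightarrow>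
              F q (q - 1) n \<le> G q (q - 1) n \<and>
              real (G q (q - 1) n) \<le> real n powr (1 + \<epsilon>)))"
proof -
  have main: "F q (q - 1) n \<le> G q (q - 1) n \<and>
              real (G q (q - 1) n) \<le> real n powr (1 + 400 / sqrt (log 2 (real q)))"
    if q: "q \<ge> 4" and n: "n \<ge> 1" for q n :: nat
  proof
    show "F q (q - 1) n \<le> G q (q - 1) n" by (rule F_le_G) (use q in simp)
    obtain S where S: "G q (q-1) n = card S" "S \<subseteq> cube q n"
      "\<forall>x\<in>S. \<forall>y\<in>S. x \<noteq> y \<longrightarrow> r_less (q-1) x y \<or> r_less (q-1) y x"
      using G_facts(2)[of q n] q by auto
    show "real (G q (q - 1) n) \<le> real n powr (1 + 400 / sqrt (log 2 (real q)))"
      unfolding S(1) by (rule set_bound[OF q n S(2) S(3)])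
  qed
  show ?thesis
  proof
    show "\<exists>C::real. C > 0 \<and> (\<forall>q n::nat. q \<ge> 4 \<longrightarrow> n \<ge> 1 \<longrightarrow>
              F q (q - 1) n \<le> G q (q - 1) n \<and>
              real (G q (q - 1) n) \<le> real n powr (1 + C / sqrt (log 2 (real q))))"
      by (rule exI[of _ 400]) (use main in auto)
  next
    show "\<forall>\<epsilon>::real. \<epsilon> > 0 \<longrightarrow> (\<exists>q0::nat. \<forall>q n::nat. q \<ge> q0 \<longrightarrow> n \<ge> 1 \<longrightarrow>
              F q (q - 1) n \<le> G q (q - 1) n \<and>
              real (G q (q - 1) n) \<le> real n powr (1 + \<epsilon>))"
    proof (intro allI impI)
      fix \<epsilon> :: real assume ep: "\<epsilon> > 0"
      define q0 where "q0 = max 4 (nat \<lceil>2 powr ((400/\<epsilon>)^2)\<rceil>)"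
      show "\<exists>q0::nat. \<forall>q n::nat. q \<ge> q0 \<longrightarrow> n \<ge> 1 \<longrightarrow>
              F q (q - 1) n \<le> G q (q - 1) n \<and> real (G q (q - 1) n) \<le> real n powr (1 + \<epsilon>)"
      proof (intro exI[of _ q0] allI impI)
        fix q n :: nat assume q: "q \<ge> q0" and n: "n \<ge> 1"
        have q4: "q \<ge> 4" using q by (simp add: q0_def)
        have "real q \<ge> 2 powr ((400/\<epsilon>)^2)" using q by (simp add: q0_def)
        hence lg: "log 2 (real q) \<ge> (400/\<epsilon>)^2"
          using q4 by (metis le_log_iff less_numeral_extra(1) less_le_trans of_nat_0_less_iff one_less_numeral_iff semiring_norm(76) zero_less_numeral powr_gt_zero)
        hence "sqrt (log 2 (real q)) \<ge> 400/\<epsilon>"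
          using ep real_sqrt_le_mono by fastforce
        moreover have "sqrt (log 2 (real q)) > 0"
        proof -
          have "(400/\<epsilon>)^2 > 0" using ep by simp
          hence "log 2 (real q) > 0" using lg by linarith
          thus ?thesis by simp
        qed
        ultimately have le: "400 / sqrt (log 2 (real q)) \<le> \<epsilon>"
          using ep by (simp add: field_simps)
        have "real n powr (1 + 400 / sqrt (log 2 (real q))) \<le> real n powr (1 + \<epsilon>)"
          using le n by (intro powr_mono) auto
        thus "F q (q - 1) n \<le> G q (q - 1) n \<and> real (G q (q - 1) n) \<le> real n powr (1 + \<epsilon>)"
          using main[OF q4 n] by auto
      qed
    qed
  qed
qed


end
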